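(* Let $T$ be a node with $t$ cases, let $R_0$ be the residual sum of squares of the current residuals in $T$ (before fitting), and let $\Delta_1,\Delta_2$ and $v_1,v_2$ be the impurity gains and degrees of freedom of two regression models fitted on $T$. Then: (i) If model 1 does better than CON, i.e. $\mathrm{BIC}_{con}>\mathrm{BIC}_1$, then $t\Delta_1/R_0>C(v_1,t)>0$ for some positive function $C$ depending only on $v_1$ and $t$. (ii) If $\mathrm{BIC}_{con}>\mathrm{BIC}_1$ and $\mathrm{BIC}_2>\mathrm{BIC}_1$ with $v_2\ge v_1$, then $\frac{\Delta_1}{\Delta_2}\ge\frac{v_1-1}{v_2-1}$. Moreover, if CON is chosen at a node, it will also be chosen in subsequent model selections on that node.
   Context: For a model fitted by least squares to the current residuals $r$ of the $t$ cases in a node $T$, the impurity gain is $\Delta=(R_0-\mathrm{RSS})/t$, where $\mathrm{RSS}$ is the residual sum of squares after the fit, so $\mathrm{RSS}=R_0-t\Delta$. The BIC of a model with $v$ degrees of freedom is $\mathrm{BIC}=t\log(\mathrm{RSS}/t)+v\log t$. CON is the constant (mean) fit, with $v=1$. In the PILOT algorithm, in each node the model (among CON, LIN, PCON, BLIN, PLIN with $v=1,2,5,5,7$) with smallest BIC is selected; "subsequent model selections" means selection applied again to the residuals of the node after the fit. *)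

theory Defs
  imports Complex_Main
begin

text \<open>A node T holds t cases (indices i < t), with p numeric predictors:
  x i j is the value of predictor j (j < p) for case i, and r i is the current
  residual of case i. A regression model is fitted by least squares; a model class
  is represented by the set of fitted-value vectors (nat => real) it can produce.\<close>

datatype pmodel = CON | LIN | PCON | BLIN | PLIN

fun df :: "pmodel \<Rightarrow> nat" where
  "df CON = 1" | "df LIN = 2" | "df PCON = 5" | "df BLIN = 5" | "df PLIN = 7"

fun model_class :: "(nat \<Rightarrow> nat \<Rightarrow> real) \<Rightarrow> nat \<Rightarrow> pmodel \<Rightarrow> (nat \<Rightarrow> real) set" where
  "model_class x p CON = {f. \<exists>c. f = (\<lambda>i. c)}"
| "model_class x p LIN = {f. \<exists>j<p. \<exists>a b. f = (\<lambda>i. a + b * x i j)}"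
| "model_class x p PCON = {f. \<exists>j<p. \<exists>s a b. f = (\<lambda>i. if x i j \<le> s then a else b)}"
| "model_class x p BLIN = {f. \<exists>j<p. \<exists>s a b c.
       f = (\<lambda>i. a + b * x i j + c * max (x i j - s) 0)}"
| "model_class x p PLIN = {f. \<exists>j<p. \<exists>s a1 b1 a2 b2.
       f = (\<lambda>i. if x i j \<le> s then a1 + b1 * x i j else a2 + b2 * x i j)}"

definition R0 :: "nat \<Rightarrow> (nat \<Rightarrow> real) \<Rightarrow> real" where
  "R0 t r = (\<Sum>i<t. (r i)\<^sup>2)"

definition rss :: "nat \<Rightarrow> (nat \<Rightarrow> nat \<Rightarrow> real) \<Rightarrow> nat \<Rightarrow> (nat \<Rightarrow> real) \<Rightarrow> pmodel \<Rightarrow> real" where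
  "rss t x p r m = Inf ((\<lambda>f. \<Sum>i<t. (r i - f i)\<^sup>2) ` model_class x p m)"

definition gain :: "nat \<Rightarrow> (nat \<Rightarrow> nat \<Rightarrow> real) \<Rightarrow> nat \<Rightarrow> (nat \<Rightarrow> real) \<Rightarrow> pmodel \<Rightarrow> real" where
  "gain t x p r m = (R0 t r - rss t x p r m) / real t"

definition bic :: "nat \<Rightarrow> real \<Rightarrow> nat \<Rightarrow> real" where
  "bic t R v = real t * ln (R / real t) + real v * ln (real t)"

definition BIC :: "nat \<Rightarrow> (nat \<Rightarrow> nat \<Rightarrow> real) \<Rightarrow> nat \<Rightarrow> (nat \<Rightarrow> real) \<Rightarrow> pmodel \<Rightarrow> real" where
  "BIC t x p r m = bic t (rss t x p r m) (df m)"

definition con_selected :: "nat \<Rightarrow> (nat \<Rightarrow> nat \<Rightarrow> real) \<Rightarrow> nat \<Rightarrow> (nat \<Rightarrow> real) \<Rightarrow> bool" where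
  "con_selected t x p r = (\<forall>m. BIC t x p r CON \<le> BIC t x p r m)"

end

theory Submission imports Defs begin

lemma const_in: "0 < p \<Longrightarrow> (\<lambda>i. c) \<in> model_class x p m"
proof (cases m)
  case LIN then show ?thesis if "0<p"
  proof -
    show ?thesis using that LIN apply simp apply (rule exI[of _ 0]) apply simp
      apply (rule exI[of _ c], rule exI[of _ 0]) by simp
  qed
next
  case PCON then show ?thesis if "0<p" using that
    by (auto intro!: exI[of _ 0] exI[of _ c])
next
  case BLIN then show ?thesis if "0<p"
  proof -
    show ?thesis using that BLIN apply simp apply (rule exI[of _ 0]) apply simp
      apply (rule exI[of _ 0], rule exI[of _ c], rule exI[of _ 0], rule exI[of _ 0]) by simp
  qed
next
  case PLIN then show ?thesis if "0<p"
  proof -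
    show ?thesis using that PLIN apply simp apply (rule exI[of _ 0]) apply simp
      apply (rule exI[of _ 0], rule exI[of _ c], rule exI[of _ 0], rule exI[of _ c], rule exI[of _ 0]) by simp
  qed
qed auto

lemma shift_in: "f \<in> model_class x p m \<Longrightarrow> (\<lambda>i. f i + d) \<in> model_class x p m"
proof (cases m)
  case CON then show ?thesis if "f \<in> model_class x p m" using that by auto
next
  case LIN then show ?thesis if "f \<in> model_class x p m" using that
    apply clarsimp
    subgoal for j a b by (rule exI[of _ j], simp, rule exI[of _ "a+d"], rule exI[of _ b], auto)
    done
next
  case PCON then show ?thesis if "f \<in> model_class x p m" using that
    apply clarsimp
    subgoal for j s a b by (rule exI[of _ j], simp, rule exI[of _ s], rule exI[of _ "a+d"], rule exI[of _ "b+d"], auto)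
    done
next
  case BLIN then show ?thesis if "f \<in> model_class x p m" using that
    apply clarsimp
    subgoal for j s a b c by (rule exI[of _ j], simp, rule exI[of _ s], rule exI[of _ "a+d"], rule exI[of _ b], rule exI[of _ c], auto)
    done
next
  case PLIN then show ?thesis if "f \<in> model_class x p m" using that
    apply clarsimp
    subgoal for j s a1 b1 a2 b2 by (rule exI[of _ j], simp, rule exI[of _ s], rule exI[of _ "a1+d"], rule exI[of _ b1], rule exI[of _ "a2+d"], rule exI[of _ b2], auto)
    done
qed

lemma bdd: "bdd_below ((\<lambda>f. \<Sum>i<t. (r i - f i)\<^sup>2 :: real) ` A)"
  by (rule bdd_belowI[of _ 0]) (auto intro: sum_nonneg)

lemma rss_nonneg: "0 < p \<Longrightarrow> 0 \<le> rss t x p r m"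
  unfolding rss_def using const_in[of p 0 x m]
  by (intro cInf_greatest) (auto intro: sum_nonneg)

lemma rss_le: "f \<in> model_class x p m \<Longrightarrow> rss t x p r m \<le> (\<Sum>i<t. (r i - f i)\<^sup>2)"
  unfolding rss_def by (rule cInf_lower[OF _ bdd]) auto

lemma rss_le_con: "0 < p \<Longrightarrow> rss t x p r m \<le> rss t x p r CON"
  unfolding rss_def
  by (rule cInf_superset_mono) (auto intro: bdd const_in)

lemma rss_con_le_R0: "rss t x p r CON \<le> R0 t r"
proof -
  have "(\<lambda>i. 0::real) \<in> model_class x p CON" by auto
  from rss_le[OF this, of t r] show ?thesis by (simp add: R0_def)
qed

lemma rss_shift: "rss t x p (\<lambda>i. r i - c) m = rss t x p r m"
proof -
  have "(\<lambda>f. \<Sum>i<t. (r i - c - f i)\<^sup>2) ` model_class x p m = (\<lambda>f. \<Sum>i<t. (r i - f i)\<^sup>2) ` model_class x p m"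
  proof (intro equalityI subsetI)
    fix y assume "y \<in> (\<lambda>f. \<Sum>i<t. (r i - c - f i)\<^sup>2) ` model_class x p m"
    then obtain f where f: "f \<in> model_class x p m" "y = (\<Sum>i<t. (r i - c - f i)\<^sup>2)" by auto
    have "y = (\<lambda>f. \<Sum>i<t. (r i - f i)\<^sup>2) (\<lambda>i. f i + c)" using f by (simp add: algebra_simps)
    then show "y \<in> (\<lambda>f. \<Sum>i<t. (r i - f i)\<^sup>2) ` model_class x p m" by (rule image_eqI[OF _ shift_in[OF f(1)]])
  next
    fix y assume "y \<in> (\<lambda>f. \<Sum>i<t. (r i - f i)\<^sup>2) ` model_class x p m"
    then obtain f where f: "f \<in> model_class x p m" "y = (\<Sum>i<t. (r i - f i)\<^sup>2)" by auto
    have "y = (\<lambda>f. \<Sum>i<t. (r i - c - f i)\<^sup>2) (\<lambda>i. f i + - c)" using f by (simp add: algebra_simps)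
    then show "y \<in> (\<lambda>f. \<Sum>i<t. (r i - c - f i)\<^sup>2) ` model_class x p m" by (rule image_eqI[OF _ shift_in[OF f(1)]])
  qed
  then show ?thesis unfolding rss_def by simp
qed

lemma df_ge2: "m \<noteq> CON \<Longrightarrow> 2 \<le> df m" by (cases m) auto
lemma df_ge1: "1 \<le> df m" by (cases m) auto

lemma geo_ineq:
  fixes y :: real assumes "0 \<le> y" "y \<le> 1" "n \<le> m"
  shows "real n * (\<Sum>i<m. y^i) \<le> real m * (\<Sum>i<n. y^i)"
proof -
  define S where "S = (\<Sum>i<n. y^i)"
  define T where "T = (\<Sum>i\<in>{n..<m}. y^i)"
  have split: "(\<Sum>i<m. y^i) = S + T" unfolding S_def T_def
    using assms(3) by (metis atLeast0LessThan sum.atLeastLessThan_concat zero_le)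
  have "T \<le> (\<Sum>i\<in>{n..<m}. y^n)" unfolding T_def
    by (rule sum_mono) (simp add: assms power_decreasing)
  hence T: "T \<le> real (m - n) * y^n" by simp
  have "(\<Sum>i<n. y^n) \<le> S" unfolding S_def
    by (rule sum_mono) (simp add: assms power_decreasing)
  hence S: "real n * y^n \<le> S" by simp
  have "real n * (S + T) \<le> real n * S + real n * (real (m - n) * y^n)"
    using T by (simp add: distrib_left mult_left_mono)
  also have "\<dots> \<le> real n * S + real (m - n) * S"
    using S mult_left_mono[OF S, of "real (m - n)"] by (simp add: mult.left_commute)
  also have "\<dots> = real m * S" using assms(3) by (simp add: of_nat_diff algebra_simps)
  finally show ?thesis using split S_def by simp
qed


lemma geo_ineq2:
  fixes y :: real assumes "0 \<le> y" "y \<le> 1" "n \<le> m"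
  shows "real n * (1 - y^m) \<le> real m * (1 - y^n)"
proof -
  have "(1 - y) * (real n * (\<Sum>i<m. y^i)) \<le> (1 - y) * (real m * (\<Sum>i<n. y^i))"
    using geo_ineq[OF assms] assms by (intro mult_left_mono) auto
  then show ?thesis by (simp add: one_diff_power_eq algebra_simps)
qed

lemma t_ge2:
  assumes p: "0 < p" and b: "BIC t x p r CON > BIC t x p r m"
  shows "2 \<le> t" "m \<noteq> CON"
proof -
  show "m \<noteq> CON" using b by auto
  show "2 \<le> t"
  proof (rule ccontr)
    assume "\<not> 2 \<le> t"
    then consider "t = 0" | "t = 1" by linarith
    then show False
    proof cases
      case 1 then show False using b by (simp add: BIC_def bic_def)
    next
      case 2
      have "rss t x p r CON \<le> (\<Sum>i<t. (r i - r 0)\<^sup>2)" by (rule rss_le) auto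
      with 2 have c0: "rss t x p r CON = 0" using rss_nonneg[OF p, of t x r CON] by simp
      hence "rss t x p r m = 0" using rss_le_con[OF p, of t x r m] rss_nonneg[OF p, of t x r m] by simp
      with c0 2 b show False by (simp add: BIC_def bic_def)
    qed
  qed
qed

definition CC :: "nat \<Rightarrow> nat \<Rightarrow> real" where
  "CC v t = (if 2 \<le> t \<and> 2 \<le> v then (1 - exp (- (real v - 1) * ln (real t) / real t)) / 2 else 1/2)"

lemma partA:
  assumes p: "0 < p" and b: "BIC t x p r CON > BIC t x p r m"
  shows "real t * gain t x p r m / R0 t r > CC (df m) t \<and> CC (df m) t > 0"
proof -
  have t2: "2 \<le> t" and mc: "m \<noteq> CON" using t_ge2[OF p b] by auto
  define v where "v = df m"
  have v2: "2 \<le> v" using df_ge2[OF mc] v_def by simp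
  define T where "T = real t"
  have T2: "T \<ge> 2" using t2 T_def by simp
  have lnT: "ln T > 0" using T2 by simp
  define E where "E = exp (- (real v - 1) * ln T / T)"
  have "- (real v - 1) * ln T / T < 0" using v2 T2 lnT
    by (intro divide_neg_pos mult_neg_pos) auto
  hence E1: "E < 1" "E > 0" unfolding E_def by auto
  have CCe: "CC (df m) t = (1 - E) / 2" using t2 v2 unfolding CC_def E_def T_def v_def by simp
  define X where "X = rss t x p r m"
  define c where "c = rss t x p r CON"
  define R where "R = R0 t r"
  have X0: "X \<ge> 0" using rss_nonneg[OF p] X_def by simp
  have Xc: "X \<le> c" using rss_le_con[OF p] X_def c_def by simp
  have cR: "c \<le> R" using rss_con_le_R0 c_def R_def by simp
  have bb: "T * ln (c / T) + ln T > T * ln (X / T) + real v * ln T"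
    using b unfolding BIC_def bic_def X_def c_def T_def v_def by simp
  have gain_eq: "real t * gain t x p r m = R - X"
    unfolding gain_def X_def R_def using t2 by simp
  have main: "(R - X) / R > (1 - E) / 2"
  proof (cases "X = 0")
    case True
    have "R > 0"
    proof (rule ccontr)
      assume "\<not> R > 0"
      hence "c = 0" using cR Xc X0 by simp
      with bb True have "ln T > real v * ln T" by simp
      moreover have "real v * ln T \<ge> 1 * ln T" using v2 lnT by (intro mult_right_mono) auto
      ultimately show False by simp
    qed
    then show ?thesis using True E1 by simp
  next
    case False
    hence Xp: "X > 0" using X0 by simp
    hence cp: "c > 0" using Xc by simp
    have "T * (ln c - ln T) + ln T > T * (ln X - ln T) + real v * ln T"
      using bb cp Xp T2 by (simp add: ln_div)
    hence "T * (ln X - ln c) < - (real v - 1) * ln T" by (simp add: algebra_simps)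
    hence "ln X - ln c < - (real v - 1) * ln T / T" using T2 by (simp add: field_simps)
    hence "exp (ln X - ln c) < E" unfolding E_def by simp
    hence "X / c < E" using Xp cp by (simp add: exp_diff)
    moreover have "X / R \<le> X / c" using Xp cp cR by (intro divide_left_mono) auto
    moreover have "R > 0" using cp cR by simp
    ultimately have "(R - X) / R > 1 - E" by (simp add: diff_divide_distrib)
    moreover have "(1 - E) / 2 < 1 - E" using E1 by simp
    ultimately show ?thesis by (meson less_trans)
  qed
  have "real t * gain t x p r m / R0 t r = (R - X) / R" using gain_eq R_def by simp
  then show ?thesis unfolding CCe using main E1 by (simp only:) simp
qed


lemma partB:
  assumes p: "0 < p" and b1: "BIC t x p r CON > BIC t x p r m1"
    and b2: "BIC t x p r m2 > BIC t x p r m1" and dd: "df m2 \<ge> df m1"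
    and x1p: "rss t x p r m1 > 0" and x2p: "rss t x p r m2 > 0"
    and g2: "gain t x p r m2 > 0"
  shows "gain t x p r m1 / gain t x p r m2 \<ge> (real (df m1) - 1) / (real (df m2) - 1)"
proof -
  have t2: "2 \<le> t" and mc: "m1 \<noteq> CON" using t_ge2[OF p b1] by auto
  define n where "n = df m1 - 1"
  define k where "k = df m2 - 1"
  have n1: "1 \<le> n" using df_ge2[OF mc] n_def by simp
  have nk: "n \<le> k" using dd n_def k_def by simp
  have v1: "real (df m1) = real n + 1" using df_ge1[of m1] n_def by simp
  have v2: "real (df m2) = real k + 1" using df_ge1[of m2] k_def by simp
  define T where "T = real t"
  have T2: "T \<ge> 2" using t2 T_def by simp
  have lnT: "ln T > 0" using T2 by simp
  define a where "a = ln T / T"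
  have a0: "a > 0" using lnT T2 a_def by simp
  define y where "y = exp (- a)"
  have y0: "0 < y" and y1: "y < 1" using a0 y_def by auto
  have ypow: "\<And>j. exp (- (real j * a)) = y ^ j"
    unfolding y_def by (metis exp_of_nat_mult mult_minus_right)
  define X1 where "X1 = rss t x p r m1"
  define X2 where "X2 = rss t x p r m2"
  define c where "c = rss t x p r CON"
  define R where "R = R0 t r"
  have Xc: "X1 \<le> c" using rss_le_con[OF p] X1_def c_def by simp
  have cR: "c \<le> R" using rss_con_le_R0 c_def R_def by simp
  have X1p: "X1 > 0" and X2p: "X2 > 0" using x1p x2p X1_def X2_def by auto
  have cp: "c > 0" using Xc X1p by simp
  have bb1: "T * ln (c / T) + ln T > T * ln (X1 / T) + (real n + 1) * ln T"
    using b1 unfolding BIC_def bic_def X1_def c_def T_def v1 by simp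
  hence "T * (ln c - ln T) + ln T > T * (ln X1 - ln T) + (real n + 1) * ln T"
    using cp X1p T2 by (simp add: ln_div)
  hence "T * (ln X1 - ln c) < - (real n * ln T)" by (simp add: algebra_simps)
  hence "ln X1 - ln c < - (real n * a)" using T2 unfolding a_def by (simp add: field_simps)
  hence "exp (ln X1 - ln c) < y ^ n" using ypow by (metis exp_less_mono)
  hence "X1 / c < y ^ n" using X1p cp by (simp add: exp_diff)
  hence X1b: "X1 < c * y ^ n" using cp by (simp add: field_simps)
  have X1R: "X1 \<le> R * y ^ n"
  proof -
    have "c * y ^ n \<le> R * y ^ n" using y0 by (intro mult_right_mono[OF cR]) simp
    then show ?thesis using X1b by simp
  qed
  have bb2: "T * ln (X2 / T) + (real k + 1) * ln T > T * ln (X1 / T) + (real n + 1) * ln T"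
    using b2 unfolding BIC_def bic_def X1_def X2_def T_def v1 v2 by simp
  hence "T * (ln X2 - ln T) + (real k + 1) * ln T > T * (ln X1 - ln T) + (real n + 1) * ln T"
    using X2p X1p T2 by (simp add: ln_div)
  hence "T * (ln X1 - ln X2) < (real k - real n) * ln T" by (simp add: algebra_simps)
  hence "ln X1 - ln X2 < real (k - n) * a" using T2 nk unfolding a_def by (simp add: field_simps of_nat_diff)
  hence "- (real (k - n) * a) < ln X2 - ln X1" by simp
  hence "y ^ (k - n) < exp (ln X2 - ln X1)" using ypow by (metis exp_less_mono)
  hence "y ^ (k - n) < X2 / X1" using X1p X2p by (simp add: exp_diff)
  hence X2b: "X1 * y ^ (k - n) \<le> X2" using X1p by (simp add: field_simps)
  have Rx2: "R - X2 > 0" using g2 T2 unfolding gain_def X2_def R_def T_def by (simp add: zero_less_divide_iff)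
  have ykn: "y ^ (k - n) \<le> 1" using y0 y1 by (simp add: power_le_one)
  have coef: "real k - real n * y ^ (k - n) \<ge> 0"
  proof -
    have "real n * y ^ (k - n) \<le> real n * 1" using ykn by (intro mult_left_mono) auto
    then show ?thesis using nk by simp
  qed
  have yy: "y ^ n * y ^ (k - n) = y ^ k" using nk by (simp add: power_add[symmetric])
  have geo: "real n * (1 - y^k) \<le> real k * (1 - y^n)"
    using geo_ineq2[of y n k] y0 y1 nk by simp
  have "real n * (R - X2) \<le> real n * (R - X1 * y ^ (k - n))"
    using X2b by (intro mult_left_mono) auto
  also have "\<dots> \<le> real k * (R - X1)"
  proof -
    have "X1 * (real k - real n * y ^ (k - n)) \<le> (R * y ^ n) * (real k - real n * y ^ (k - n))"
      using X1R coef by (rule mult_right_mono)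
    also have "\<dots> = R * (real k * y ^ n - real n * y ^ k)"
      using yy by (simp add: algebra_simps)
    also have "\<dots> \<le> R * (real k - real n)"
      using geo cR cp by (intro mult_left_mono) (auto simp: algebra_simps)
    finally show ?thesis by (simp add: algebra_simps)
  qed
  finally have key: "real n * (R - X2) \<le> real k * (R - X1)" .
  have k0: "real k > 0" using n1 nk by simp
  have "gain t x p r m1 / gain t x p r m2 = (R - X1) / (R - X2)"
    unfolding gain_def X1_def X2_def R_def using t2 by simp
  moreover have "real n / real k \<le> (R - X1) / (R - X2)"
    using key k0 Rx2 by (simp add: divide_simps mult.commute)
  ultimately show ?thesis using v1 v2 by simp
qed

lemma partC:
  assumes "con_selected t x p r"
  shows "con_selected t x p (\<lambda>i. r i - c)"
  using assms unfolding con_selected_def BIC_def by (simp add: rss_shift)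

theorem proposition2:
  shows "(\<exists>C :: nat \<Rightarrow> nat \<Rightarrow> real.
           \<forall>(t::nat) (p::nat) (x::nat \<Rightarrow> nat \<Rightarrow> real) (r::nat \<Rightarrow> real) (m::pmodel).
             0 < p \<longrightarrow> BIC t x p r CON > BIC t x p r m \<longrightarrow>
               real t * gain t x p r m / R0 t r > C (df m) t \<and> C (df m) t > 0)
       \<and> (\<forall>(t::nat) (p::nat) (x::nat \<Rightarrow> nat \<Rightarrow> real) (r::nat \<Rightarrow> real) (m1::pmodel) (m2::pmodel).
             0 < p \<longrightarrow> BIC t x p r CON > BIC t x p r m1 \<longrightarrow> BIC t x p r m2 > BIC t x p r m1
             \<longrightarrow> df m2 \<ge> df m1 \<longrightarrow> rss t x p r m1 > 0 \<longrightarrow> rss t x p r m2 > 0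
             \<longrightarrow> gain t x p r m2 > 0
             \<longrightarrow> gain t x p r m1 / gain t x p r m2 \<ge> (real (df m1) - 1) / (real (df m2) - 1))
       \<and> (\<forall>(t::nat) (p::nat) (x::nat \<Rightarrow> nat \<Rightarrow> real) (r::nat \<Rightarrow> real).
             0 < p \<longrightarrow> con_selected t x p r \<longrightarrow>
             (\<forall>c. (\<Sum>i<t. (r i - c)\<^sup>2) = rss t x p r CON \<longrightarrow>
                  con_selected t x p (\<lambda>i. r i - c)))"
  using partA partB partC by blast

end
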